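(* Let $\psi(x)=6x^5-15x^4+10x^3$ and, for $n\in\mathbb{N}$, $f_n(x)=\psi\big(0\vee(|x|-(n-1))\wedge1\big)$. For each $n\in\mathbb{N}^*$, $f_n$ is $C^2$, even, non-decreasing on $\mathbb{R}_+$, equal to $0$ on $[-(n-1),n-1]$ and to $1$ on $(-n,n)^c$; moreover $f_0\equiv1$. Furthermore, for $\alpha\in(0,2)$, $$\sup_{n\in\mathbb{N}^*,x\in\mathbb{R}}|D^\alpha f_n(x)|<+\infty,$$ and for each $n\in\mathbb{N}^*$ and $x\in(-n+1,n-1)$, $|D^\alpha f_n(x)|\le\frac{2}{\alpha(n-1-|x|)^\alpha}$. Finally, if $\eta>0$, $X(x)$ ($x\in\mathbb{R}$) are symmetric real random variables and $\sigma:\mathbb{R}\to\mathbb{R}_+$ is bounded with $\lim_{u\to\infty}\sup_x|u^\alpha\mathbb{P}(|X(x)|\ge u)-2\sigma(x)/\alpha|=0$, and $M_K(x,dh)$ is the law of $X(x)/K^{\eta/\alpha}$, then $$\lim_{K\to\infty}K^\eta\int_\mathbb{R}(f_n(x+h)-f_n(x))M_K(x,dh)=\sigma(x)D^\alpha f_n(x)$$ uniformly in $n\in\mathbb{N}^*$ and $x\in\mathbb{R}$.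
   Context: $D^\alpha f(x)=\int_\mathbb{R}(f(x+h)-f(x)-f'(x)h\mathbf{1}_{\{|h|\le1\}})\frac{dh}{|h|^{1+\alpha}}$ denotes the fractional Laplacian of order $\alpha\in(0,2)$. *)

theory Defs
  imports "HOL-Probability.Probability"
begin

definition psi :: "real \<Rightarrow> real" where
  "psi x = 6 * x ^ 5 - 15 * x ^ 4 + 10 * x ^ 3"

definition fn :: "nat \<Rightarrow> real \<Rightarrow> real" where
  "fn n x = psi (min (max 0 (\<bar>x\<bar> - (real n - 1))) 1)"

definition frac_lap :: "real \<Rightarrow> (real \<Rightarrow> real) \<Rightarrow> real \<Rightarrow> real" where
  "frac_lap \<alpha> f x = (LINT h|lborel.
      (f (x + h) - f x - deriv f x * h * indicator {-1..1} h) / \<bar>h\<bar> powr (1 + \<alpha>))"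

definition C2 :: "(real \<Rightarrow> real) \<Rightarrow> bool" where
  "C2 f \<longleftrightarrow> (\<forall>x. f differentiable at x) \<and> (\<forall>x. deriv f differentiable at x)
     \<and> continuous_on UNIV (deriv (deriv f))"

end

theory Submission
  imports Defs
begin


definition cl :: "real \<Rightarrow> real" where "cl y = min (max 0 y) 1"
definition dpsi :: "real \<Rightarrow> real" where "dpsi t = 30*t^4-60*t^3+30*t^2"
definition ddpsi :: "real \<Rightarrow> real" where "ddpsi t = 120*t^3-180*t^2+60*t"

lemma deriv_glue:
  assumes "(f has_real_derivative D) (at x within {..x})"
    "(f has_real_derivative D) (at x within {x..})"
  shows "(f has_real_derivative D) (at x)"
proof -
  have l: "(f has_real_derivative D) (at_left x)"
    by (rule DERIV_subset[OF assms(1)]) auto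
  have r: "(f has_real_derivative D) (at_right x)"
    by (rule DERIV_subset[OF assms(2)]) auto
  show ?thesis using l r unfolding has_field_derivative_iff
    by (intro filterlim_split_at)
qed

lemma cl_lt0: "y \<le> 0 \<Longrightarrow> cl y = 0" by (simp add: cl_def)
lemma cl_gt1: "y \<ge> 1 \<Longrightarrow> cl y = 1" by (simp add: cl_def)
lemma cl_mid: "0 \<le> y \<Longrightarrow> y \<le> 1 \<Longrightarrow> cl y = y" by (simp add: cl_def)

lemma pw_deriv:
  fixes F P P' :: "real \<Rightarrow> real"
  assumes P: "\<And>t. (P has_real_derivative P' t) (at t)" and P0: "P' 0 = 0" and P1: "P' 1 = 0"
    and F: "\<And>y. F y = P (cl y)"
  shows "(F has_real_derivative P' (cl y)) (at y)"
proof -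
  have c0: "(F has_real_derivative 0) (at y within S)" if "\<And>z. z \<in> S \<Longrightarrow> F z = F y" "y \<in> S" for S y
    unfolding has_field_derivative_def
  proof (rule has_derivative_transform[where f="\<lambda>_. F y"])
    show "y \<in> S" by (fact that(2))
    fix z assume "z \<in> S" then show "F z = F y" by (rule that(1))
  next
    have "((*) (0::real)) = (\<lambda>_. 0)" by auto
    then show "((\<lambda>_. F y) has_derivative (*) 0) (at y within S)" by simp
  qed
  consider "y < 0" | "y = 0" | "0 < y \<and> y < 1" | "y = 1" | "y > 1" by linarith
  then show ?thesis
  proof cases
    case 1
    have "(F has_real_derivative 0) (at y)"
      by (rule has_field_derivative_transform_within_open[where f="\<lambda>_. P 0" and S="{..<0}"])
         (use 1 in \<open>simp_all add: F cl_lt0\<close>)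
    then show ?thesis using 1 P0 by (simp add: cl_lt0)
  next
    case 5
    have "(F has_real_derivative 0) (at y)"
      by (rule has_field_derivative_transform_within_open[where f="\<lambda>_. P 1" and S="{1<..}"])
         (use 5 in \<open>simp_all add: F cl_gt1\<close>)
    then show ?thesis using 5 P1 by (simp add: cl_gt1)
  next
    case 3
    have "(F has_real_derivative P' y) (at y)"
      by (rule has_field_derivative_transform_within_open[where f="P" and S="{0<..<1}"])
         (use 3 P in \<open>simp_all add: F cl_mid\<close>)
    then show ?thesis using 3 by (simp add: cl_mid)
  next
    case 2
    have a: "(F has_real_derivative 0) (at y within {..y})"
      by (rule c0) (use 2 in \<open>simp_all add: F cl_lt0\<close>)
    have b: "(F has_real_derivative 0) (at y within {y..})"
    proof (rule has_field_derivative_transform_within[where f=P and d=1])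
      show "(P has_real_derivative 0) (at y within {y..})" using 2 P[of 0] P0 has_field_derivative_at_within by auto
      fix z assume "z \<in> {y..}" "dist z y < 1" then show "P z = F z" using 2 by (simp add: F cl_mid dist_real_def)
    qed simp_all
    show ?thesis using deriv_glue[OF a b] 2 P0 by (simp add: cl_lt0)
  next
    case 4
    have b: "(F has_real_derivative 0) (at y within {y..})"
      by (rule c0) (use 4 in \<open>simp_all add: F cl_gt1\<close>)
    have a: "(F has_real_derivative 0) (at y within {..y})"
    proof (rule has_field_derivative_transform_within[where f=P and d=1])
      show "(P has_real_derivative 0) (at y within {..y})" using 4 P[of 1] P1 has_field_derivative_at_within by auto
      fix z assume "z \<in> {..y}" "dist z y < 1" then show "P z = F z" using 4 by (simp add: F cl_mid dist_real_def)
    qed simp_all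
    show ?thesis using deriv_glue[OF a b] 4 P1 by (simp add: cl_gt1)
  qed
qed

lemma psi_deriv: "(psi has_real_derivative dpsi t) (at t)"
  unfolding psi_def[abs_def] dpsi_def
  by (auto intro!: derivative_eq_intros simp: algebra_simps)
lemma dpsi_deriv: "(dpsi has_real_derivative ddpsi t) (at t)"
  unfolding dpsi_def[abs_def] ddpsi_def
  by (auto intro!: derivative_eq_intros simp: algebra_simps)

definition phi :: "real \<Rightarrow> real" where "phi y = psi (cl y)"
definition phi1 :: "real \<Rightarrow> real" where "phi1 y = dpsi (cl y)"
definition phi2 :: "real \<Rightarrow> real" where "phi2 y = ddpsi (cl y)"

lemma phi_deriv: "(phi has_real_derivative phi1 y) (at y)"
  unfolding phi1_def by (rule pw_deriv[OF psi_deriv]) (auto simp: dpsi_def phi_def)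
lemma phi1_deriv: "(phi1 has_real_derivative phi2 y) (at y)"
  unfolding phi2_def by (rule pw_deriv[OF dpsi_deriv]) (auto simp: ddpsi_def phi1_def)
lemma cont_cl: "continuous_on UNIV cl"
  unfolding cl_def by (intro continuous_intros)
lemma cont_phi2: "continuous_on UNIV phi2"
  unfolding phi2_def[abs_def] ddpsi_def using cont_cl
  by (intro continuous_intros) (auto simp: cl_def)



lemma cl_range: "0 \<le> cl y" "cl y \<le> 1" by (auto simp: cl_def)

lemma psi_mono: "0 \<le> a \<Longrightarrow> a \<le> b \<Longrightarrow> b \<le> 1 \<Longrightarrow> psi a \<le> psi b"
proof -
  assume h: "0 \<le> a" "a \<le> b" "b \<le> 1"
  have "\<forall>t. a \<le> t \<and> t \<le> b \<longrightarrow> 0 \<le> dpsi t"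
  proof (intro allI impI)
    fix t :: real
    have "dpsi t = 30 * (t*(t-1))^2" by (simp add: dpsi_def power2_eq_square algebra_simps power4_eq_xxxx power3_eq_cube)
    then show "0 \<le> dpsi t" by simp
  qed
  then show ?thesis using DERIV_nonneg_imp_nondecreasing[of a b psi] psi_deriv h by blast
qed

lemma psi01: "psi 0 = 0" "psi 1 = 1" by (simp_all add: psi_def)

lemma psi_range: "0 \<le> t \<Longrightarrow> t \<le> 1 \<Longrightarrow> 0 \<le> psi t \<and> psi t \<le> 1"
  using psi_mono[of 0 t] psi_mono[of t 1] psi01 by auto

lemma phi1_bound: "\<bar>phi1 y\<bar> \<le> 30 * indicator {0..1} y"
proof -
  have t: "0 \<le> cl y" "cl y \<le> 1" by (rule cl_range)+
  have e: "phi1 y = 30 * (cl y * (cl y - 1))^2"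
    by (simp add: phi1_def dpsi_def power2_eq_square algebra_simps power4_eq_xxxx power3_eq_cube)
  have "\<bar>cl y * (cl y - 1)\<bar> \<le> 1" using t by (auto simp: abs_mult intro!: mult_le_one)
  then have "(cl y * (cl y - 1))^2 \<le> 1" by (metis abs_le_square_iff abs_one one_power2)
  moreover have "y \<notin> {0..1} \<Longrightarrow> phi1 y = 0" by (auto simp: phi1_def dpsi_def cl_def)
  ultimately show ?thesis using e by (auto simp: indicator_def)
qed

lemma phi2_bound: "\<bar>phi2 y\<bar> \<le> 60"
proof -
  have t: "0 \<le> cl y" "cl y \<le> 1" by (rule cl_range)+
  have e: "phi2 y = 60 * (cl y * (cl y - 1) * (2 * cl y - 1))"
    by (simp add: phi2_def ddpsi_def power2_eq_square algebra_simps power3_eq_cube)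
  have "\<bar>cl y * (cl y - 1) * (2 * cl y - 1)\<bar> \<le> 1" using t by (auto simp: abs_mult intro!: mult_le_one)
  then show ?thesis using e by (simp add: abs_mult)
qed

definition f1 :: "nat \<Rightarrow> real \<Rightarrow> real" where
  "f1 n y = phi1 (y - (real n - 1)) - phi1 (- y - (real n - 1))"
definition f2 :: "nat \<Rightarrow> real \<Rightarrow> real" where
  "f2 n y = phi2 (y - (real n - 1)) + phi2 (- y - (real n - 1))"

lemma fn_eq: "n \<ge> 1 \<Longrightarrow> fn n y = phi (y - (real n - 1)) + phi (- y - (real n - 1))"
  by (auto simp: fn_def phi_def cl_def psi01 abs_if)

lemma fn_deriv: "n \<ge> 1 \<Longrightarrow> (fn n has_real_derivative f1 n y) (at y)"
proof -
  assume n: "n \<ge> 1"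
  have "((\<lambda>y. phi (y - (real n - 1)) + phi (- y - (real n - 1))) has_real_derivative f1 n y) (at y)"
    unfolding f1_def
    by (auto intro!: derivative_eq_intros DERIV_chain2[OF phi_deriv])
  moreover have "fn n = (\<lambda>y. phi (y - (real n - 1)) + phi (- y - (real n - 1)))"
    using fn_eq[OF n] by auto
  ultimately show ?thesis by simp
qed

lemma f1_deriv: "(f1 n has_real_derivative f2 n y) (at y)"
  unfolding f1_def[abs_def] f2_def
  by (auto intro!: derivative_eq_intros DERIV_chain2[OF phi1_deriv])

lemma cont_f2: "continuous_on UNIV (f2 n)"
  unfolding f2_def[abs_def]
  by (intro continuous_intros continuous_on_compose2[OF cont_phi2]) auto

lemma deriv_fn: "n \<ge> 1 \<Longrightarrow> deriv (fn n) = f1 n"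
  using fn_deriv DERIV_imp_deriv by blast
lemma deriv_f1: "deriv (f1 n) = f2 n"
  using f1_deriv DERIV_imp_deriv by blast

lemma C2_fn: "n \<ge> 1 \<Longrightarrow> C2 (fn n)"
  unfolding C2_def using fn_deriv f1_deriv cont_f2 deriv_fn deriv_f1
  by (metis real_differentiable_def)

lemma fn_range: "0 \<le> fn n y" "fn n y \<le> 1"
  using psi_range[OF cl_range] by (auto simp: fn_def cl_def[symmetric])

lemma f1_bound: "\<bar>f1 n y\<bar> \<le> 30 * indicator {real n - 1 .. real n} y + 30 * indicator {- real n .. - (real n - 1)} y"
proof -
  have "\<bar>f1 n y\<bar> \<le> \<bar>phi1 (y - (real n - 1))\<bar> + \<bar>phi1 (- y - (real n - 1))\<bar>"
    unfolding f1_def by linarith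
  also have "\<dots> \<le> 30 * indicator {0..1} (y - (real n - 1)) + 30 * indicator {0..1} (- y - (real n - 1))"
    using phi1_bound by (intro add_mono) auto
  also have "\<dots> = 30 * indicator {real n - 1 .. real n} y + 30 * indicator {- real n .. - (real n - 1)} y"
    by (auto simp: indicator_def)
  finally show ?thesis .
qed

lemma f2_bound: "\<bar>f2 n y\<bar> \<le> 120"
  using phi2_bound[of "y - (real n - 1)"] phi2_bound[of "- y - (real n - 1)"] unfolding f2_def by linarith

lemma fn_props: "n \<ge> 1 \<Longrightarrow> C2 (fn n) \<and> (\<forall>x. fn n (- x) = fn n x) \<and> mono_on {0..} (fn n)
            \<and> (\<forall>x. \<bar>x\<bar> \<le> real n - 1 \<longrightarrow> fn n x = 0)
            \<and> (\<forall>x. \<bar>x\<bar> \<ge> real n \<longrightarrow> fn n x = 1)"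
proof (intro conjI allI impI)
  assume "n \<ge> 1" then show "C2 (fn n)" by (rule C2_fn)
next
  fix x show "fn n (- x) = fn n x" by (simp add: fn_def)
next
  show "mono_on {0..} (fn n)"
  proof (rule mono_onI)
    fix a b :: real assume "a \<in> {0..}" "b \<in> {0..}" "a \<le> b"
    then show "fn n a \<le> fn n b" unfolding fn_def
      by (intro psi_mono) auto
  qed
next
  fix x assume "\<bar>x\<bar> \<le> real n - 1" then show "fn n x = 0" by (simp add: fn_def psi01)
next
  fix x assume "\<bar>x\<bar> \<ge> real n" then show "fn n x = 1" by (simp add: fn_def psi01)
qed

lemma fn0: "fn 0 x = 1" by (simp add: fn_def psi01)

lemma mvt_real:
  assumes "\<And>y. (f has_real_derivative f' y) (at y)"
  shows "\<exists>z. min a b \<le> z \<and> z \<le> max a b \<and> f b - f a = (b - a) * f' z"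
proof -
  consider "a < b" | "a = b" | "b < a" by linarith
  then show ?thesis
  proof cases
    case 1 then obtain z where "a < z" "z < b" "f b - f a = (b - a) * f' z" using MVT2[of a b f f'] assms by blast
    then show ?thesis using 1 by (intro exI[of _ z]) auto
  next
    case 2 then show ?thesis by auto
  next
    case 3 then obtain z where "b < z" "z < a" "f a - f b = (a - b) * f' z" using MVT2[of b a f f'] assms by force
    then show ?thesis by (intro exI[of _ z]) (auto simp: algebra_simps)
  qed
qed

lemma lip_real:
  assumes "\<And>y. (f has_real_derivative f' y) (at y)" "\<And>y. \<bar>f' y\<bar> \<le> B"
  shows "\<bar>f b - f a\<bar> \<le> B * \<bar>b - a\<bar>"
proof -
  obtain z where "f b - f a = (b - a) * f' z" using mvt_real[OF assms(1)] by blast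
  then have "\<bar>f b - f a\<bar> = \<bar>f' z\<bar> * \<bar>b - a\<bar>" by (simp add: abs_mult)
  then show ?thesis using assms(2)[of z] by (simp add: mult_right_mono)
qed



lemma E_inf:
  fixes s \<alpha> :: real assumes s: "s > 0" and a: "\<alpha> > 0"
  shows "has_bochner_integral lborel (\<lambda>h. indicator {h. s \<le> \<bar>h\<bar>} h / \<bar>h\<bar> powr (1+\<alpha>)) (2 * (s powr (-\<alpha>) / \<alpha>))"
proof -
  have hi: "((\<lambda>x. x powr (-1-\<alpha>)) has_integral -(s powr (-1-\<alpha>+1)) / (-1-\<alpha>+1)) {s..}"
    using has_integral_powr_to_inf[of "-1-\<alpha>" s] s a by simp
  have nn: "(\<integral>\<^sup>+x. ennreal (x powr (-1-\<alpha>)) * indicator {s..} x \<partial>lborel) = ennreal (-(s powr (-1-\<alpha>+1)) / (-1-\<alpha>+1))"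
    by (rule nn_integral_has_integral_lebesgue'[OF _ hi]) auto
  have "has_bochner_integral lborel (\<lambda>x. x powr (-1-\<alpha>) * indicator {s..} x) (s powr (-\<alpha>) / \<alpha>)"
  proof (rule has_bochner_integral_nn_integral)
    show "(\<integral>\<^sup>+x. ennreal (x powr (-1-\<alpha>) * indicator {s..} x) \<partial>lborel) = ennreal (s powr (-\<alpha>) / \<alpha>)"
    proof -
      have "\<And>x. ennreal (x powr (-1-\<alpha>) * indicator {s..} x) = ennreal (x powr (-1-\<alpha>)) * indicator {s..} x"
        by (auto simp: indicator_def)
      then show ?thesis using nn by simp
    qed
  qed (use a in auto)
  then have "has_bochner_integral lborel (\<lambda>h. indicator {0..} h *\<^sub>R (indicator {h. s \<le> \<bar>h\<bar>} h / \<bar>h\<bar> powr (1+\<alpha>))) (s powr (-\<alpha>) / \<alpha>)"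
  proof (rule has_bochner_integral_cong[THEN iffD1, rotated -1])
    fix h :: real show "h powr (-1-\<alpha>) * indicator {s..} h = indicator {0..} h *\<^sub>R (indicator {h. s \<le> \<bar>h\<bar>} h / \<bar>h\<bar> powr (1+\<alpha>))"
    proof -
      have "h powr (-1-\<alpha>) = 1 / h powr (1+\<alpha>)"
        using powr_minus_divide[of h "1+\<alpha>"] by (simp add: algebra_simps)
      then show ?thesis using s by (auto simp: indicator_def)
    qed
  qed auto
  then have "has_bochner_integral lborel (\<lambda>h. indicator {h. s \<le> \<bar>h\<bar>} h / \<bar>h\<bar> powr (1+\<alpha>)) (2 *\<^sub>R (s powr (-\<alpha>) / \<alpha>))"
    by (rule has_bochner_integral_even_function) (auto simp: indicator_def)
  then show ?thesis by simp
qed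

lemma E_zero:
  fixes c \<beta> :: real assumes c: "c \<ge> 0" and b: "\<beta> > -1"
  shows "has_bochner_integral lborel (\<lambda>h. indicator {-c..c} h * \<bar>h\<bar> powr \<beta>) (2 * (c powr (\<beta>+1) / (\<beta>+1)))"
proof -
  have hi: "((\<lambda>x. x powr \<beta>) has_integral (c powr (\<beta>+1) / (\<beta>+1))) {0..c}"
    using has_integral_powr_from_0[OF b c] .
  have nn: "(\<integral>\<^sup>+x. ennreal (x powr \<beta>) * indicator {0..c} x \<partial>lborel) = ennreal (c powr (\<beta>+1) / (\<beta>+1))"
    by (rule nn_integral_has_integral_lebesgue'[OF _ hi]) auto
  have "has_bochner_integral lborel (\<lambda>x. x powr \<beta> * indicator {0..c} x) (c powr (\<beta>+1) / (\<beta>+1))"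
  proof (rule has_bochner_integral_nn_integral)
    show "(\<integral>\<^sup>+x. ennreal (x powr \<beta> * indicator {0..c} x) \<partial>lborel) = ennreal (c powr (\<beta>+1) / (\<beta>+1))"
    proof -
      have "\<And>x. ennreal (x powr \<beta> * indicator {0..c} x) = ennreal (x powr \<beta>) * indicator {0..c} x"
        by (auto simp: indicator_def)
      then show ?thesis using nn by simp
    qed
  qed (use b c in auto)
  then have "has_bochner_integral lborel (\<lambda>h. indicator {0..} h *\<^sub>R (indicator {-c..c} h * \<bar>h\<bar> powr \<beta>)) (c powr (\<beta>+1) / (\<beta>+1))"
  proof (rule has_bochner_integral_cong[THEN iffD1, rotated -1])
    fix h :: real show "h powr \<beta> * indicator {0..c} h = indicator {0..} h *\<^sub>R (indicator {-c..c} h * \<bar>h\<bar> powr \<beta>)"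
      using c by (auto simp: indicator_def)
  qed auto
  then have "has_bochner_integral lborel (\<lambda>h. indicator {-c..c} h * \<bar>h\<bar> powr \<beta>) (2 *\<^sub>R (c powr (\<beta>+1) / (\<beta>+1)))"
    by (rule has_bochner_integral_even_function) (auto simp: indicator_def)
  then show ?thesis by simp
qed



lemma layer:
  fixes \<mu> :: "real measure" and w D :: "real \<Rightarrow> real"
  assumes sf: "sigma_finite_measure \<mu>" and sets: "sets \<mu> = sets borel"
  and wm[measurable]: "w \<in> borel_measurable borel" and w0: "\<And>h. 0 \<le> w h"
  and Dm[measurable]: "D \<in> borel_measurable borel"
  and fin: "(\<integral>\<^sup>+s. ennreal (\<bar>D s\<bar> * indicator {0<..} s) * (\<integral>\<^sup>+h. ennreal (w h * indicator {h. s \<le> \<bar>h\<bar>} h) \<partial>\<mu>) \<partial>lborel) < \<infinity>"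
  shows "integrable \<mu> (\<lambda>h. w h * (\<integral>s. D s * indicator {0<..\<bar>h\<bar>} s \<partial>lborel))" (is ?A)
    and "(\<integral>h. w h * (\<integral>s. D s * indicator {0<..\<bar>h\<bar>} s \<partial>lborel) \<partial>\<mu>)
       = (\<integral>s. D s * indicator {0<..} s * (\<integral>h. w h * indicator {h. s \<le> \<bar>h\<bar>} h \<partial>\<mu>) \<partial>lborel)" (is ?B)
proof -
  note sets[measurable_cong]
  interpret M: sigma_finite_measure \<mu> by (rule sf)
  interpret P: pair_sigma_finite \<mu> lborel by unfold_locales
  define F where "F = (\<lambda>(h::real, s::real). w h * (D s * indicator {0<..\<bar>h\<bar>} s))"
  have ind: "indicator {0<..\<bar>h\<bar>} s = (indicator {p. 0 < snd p \<and> snd p \<le> \<bar>fst p\<bar>} (h, s) :: real)" for h s :: real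
    by (auto simp: indicator_def)
  have mb: "F \<in> borel_measurable (borel \<Otimes>\<^sub>M borel)"
    unfolding F_def ind by measurable
  have meas[measurable]: "F \<in> borel_measurable (\<mu> \<Otimes>\<^sub>M lborel)"
    using mb by (subst measurable_cong_sets[OF sets_pair_measure_cong[OF sets sets_lborel] refl])
  have nn: "(\<integral>\<^sup>+p. ennreal (norm (F p)) \<partial>(\<mu> \<Otimes>\<^sub>M lborel))
     = (\<integral>\<^sup>+s. ennreal (\<bar>D s\<bar> * indicator {0<..} s) * (\<integral>\<^sup>+h. ennreal (w h * indicator {h. s \<le> \<bar>h\<bar>} h) \<partial>\<mu>) \<partial>lborel)"
  proof -
    have "(\<integral>\<^sup>+p. ennreal (norm (F p)) \<partial>(\<mu> \<Otimes>\<^sub>M lborel)) = (\<integral>\<^sup>+s. (\<integral>\<^sup>+h. ennreal (norm (F (h, s))) \<partial>\<mu>) \<partial>lborel)"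
      by (rule P.nn_integral_snd[symmetric]) measurable
    also have "\<dots> = (\<integral>\<^sup>+s. (\<integral>\<^sup>+h. ennreal (\<bar>D s\<bar> * indicator {0<..} s) * ennreal (w h * indicator {h. s \<le> \<bar>h\<bar>} h) \<partial>\<mu>) \<partial>lborel)"
      by (intro nn_integral_cong) (auto simp: F_def indicator_def abs_mult w0 ennreal_mult'' mult_ac abs_of_nonneg)
    also have "\<dots> = (\<integral>\<^sup>+s. ennreal (\<bar>D s\<bar> * indicator {0<..} s) * (\<integral>\<^sup>+h. ennreal (w h * indicator {h. s \<le> \<bar>h\<bar>} h) \<partial>\<mu>) \<partial>lborel)"
      by (intro nn_integral_cong nn_integral_cmult) measurable
    finally show ?thesis .
  qed
  have int: "integrable (\<mu> \<Otimes>\<^sub>M lborel) F"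
    by (rule integrableI_bounded) (use nn fin in auto)
  have e1: "(\<integral>s. F (h, s) \<partial>lborel) = w h * (\<integral>s. D s * indicator {0<..\<bar>h\<bar>} s \<partial>lborel)" for h
    by (simp add: F_def)
  have e2: "(\<integral>h. F (h, s) \<partial>\<mu>) = D s * indicator {0<..} s * (\<integral>h. w h * indicator {h. s \<le> \<bar>h\<bar>} h \<partial>\<mu>)" for s
  proof -
    have "(\<integral>h. F (h, s) \<partial>\<mu>) = (\<integral>h. (D s * indicator {0<..} s) * (w h * indicator {h. s \<le> \<bar>h\<bar>} h) \<partial>\<mu>)"
      by (intro Bochner_Integration.integral_cong) (auto simp: F_def indicator_def)
    then show ?thesis by simp
  qed
  show ?A using P.integrable_fst'[OF int] by (simp add: e1)
  show ?B using P.Fubini_integral[of "\<lambda>h s. F (h, s)"] int by (simp add: e1 e2)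
qed



lemma cont_f1: "continuous_on UNIV (f1 n)"
  using f1_deriv by (meson DERIV_isCont continuous_at_imp_continuous_on)
lemma cont_fn: "n \<ge> 1 \<Longrightarrow> continuous_on UNIV (fn n)"
  using fn_deriv by (meson DERIV_isCont continuous_at_imp_continuous_on)
lemma meas_f1[measurable]: "f1 n \<in> borel_measurable borel"
  by (rule borel_measurable_continuous_onI[OF cont_f1])

lemma ind_shift: "(indicator {a..b} (x + s::real) :: real) = indicator {a - x..b - x} s"
   "(indicator {a..b} (x - s::real) :: real) = indicator {x - b..x - a} s"
  by (auto simp: indicator_def)

definition GG :: "nat \<Rightarrow> real \<Rightarrow> real \<Rightarrow> real" where "GG n x h = (fn n (x+h) + fn n (x-h))/2 - fn n x"
definition DD :: "nat \<Rightarrow> real \<Rightarrow> real \<Rightarrow> real" where "DD n x s = (f1 n (x+s) - f1 n (x-s))/2"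
definition BDi :: "nat \<Rightarrow> real \<Rightarrow> real \<Rightarrow> real" where
  "BDi n x s = 15 * (indicator {real n - 1 - x .. real n - x} s + indicator {- real n - x .. - (real n - 1) - x} s
      + indicator {x - real n .. x - (real n - 1)} s + indicator {x + (real n - 1) .. x + real n} s)"

context fixes n :: nat and x :: real assumes n: "n \<ge> 1"
begin

lemma meas_fn[measurable]: "fn n \<in> borel_measurable borel"
  by (rule borel_measurable_continuous_onI[OF cont_fn[OF n]])


lemma GG_deriv: "(GG n x has_real_derivative DD n x s) (at s)"
  unfolding GG_def[abs_def] DD_def
  by (auto intro!: derivative_eq_intros DERIV_chain2[OF fn_deriv[OF n]] simp: field_simps)

lemma DD_cont: "isCont (DD n x) s"
  unfolding DD_def using cont_f1
  by (intro continuous_intros) (auto simp: continuous_on_eq_continuous_at intro: isCont_o2[where g="f1 n"])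

lemma meas_DD[measurable]: "DD n x \<in> borel_measurable borel"
  unfolding DD_def[abs_def] by measurable

lemma GG_even: "GG n x (-h) = GG n x h" by (simp add: GG_def)
lemma GG0: "GG n x 0 = 0" by (simp add: GG_def)
lemma DD0: "DD n x 0 = 0" by (simp add: DD_def)

lemma GG_int: "GG n x h = (\<integral>s. DD n x s * indicator {0<..\<bar>h\<bar>} s \<partial>lborel)"
proof -
  have "(\<integral>s. DD n x s * indicator {0<..\<bar>h\<bar>} s \<partial>lborel) = (\<integral>s. DD n x s * indicator {0..\<bar>h\<bar>} s \<partial>lborel)"
    by (intro Bochner_Integration.integral_cong) (auto simp: indicator_def DD0)
  also have "\<dots> = GG n x \<bar>h\<bar> - GG n x 0"
    by (rule integral_FTC_Icc_real) (auto intro: GG_deriv DD_cont)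
  also have "\<dots> = GG n x h" by (simp add: GG0 abs_if GG_even)
  finally show ?thesis ..
qed

lemma DD_lin: "\<bar>DD n x s\<bar> \<le> 120 * \<bar>s\<bar>"
proof -
  have "\<bar>f1 n (x+s) - f1 n (x-s)\<bar> \<le> 120 * \<bar>(x+s) - (x-s)\<bar>"
    by (rule lip_real[OF f1_deriv f2_bound])
  then show ?thesis by (simp add: DD_def)
qed

lemma DD_ind: "\<bar>DD n x s\<bar> \<le> BDi n x s"
proof -
  have "\<bar>DD n x s\<bar> \<le> (\<bar>f1 n (x+s)\<bar> + \<bar>f1 n (x-s)\<bar>) / 2"
    unfolding DD_def using abs_triangle_ineq4[of "f1 n (x+s)" "f1 n (x-s)"] by simp
  also have "\<dots> \<le> ((30 * indicator {real n - 1 .. real n} (x+s) + 30 * indicator {- real n .. - (real n - 1)} (x+s))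
      + (30 * indicator {real n - 1 .. real n} (x-s) + 30 * indicator {- real n .. - (real n - 1)} (x-s))) / 2"
    using f1_bound[of n "x+s"] f1_bound[of n "x-s"] by (intro divide_right_mono add_mono) auto
  also have "\<dots> = BDi n x s" unfolding BDi_def ind_shift by (simp add: algebra_simps)
  finally show ?thesis .
qed

lemma BDi_int: "has_bochner_integral lborel (BDi n x) 60"
proof -
  have i: "has_bochner_integral lborel (indicator {a..a+1} :: real \<Rightarrow> real) 1" for a :: real
    using has_bochner_integral_real_indicator[of "{a..a+1}" lborel] by simp
  have "has_bochner_integral lborel (\<lambda>s. (15::real) * (indicator {real n - 1 - x .. (real n - 1 - x) + 1} s + indicator {- real n - x .. (- real n - x) + 1} s
      + indicator {x - real n .. (x - real n) + 1} s + indicator {x + (real n - 1) .. (x + (real n - 1)) + 1} s)) (15 * (1+1+1+1))"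
    by (intro has_bochner_integral_mult_right has_bochner_integral_add i)
  moreover have "(\<lambda>s. (15::real) * (indicator {real n - 1 - x .. (real n - 1 - x) + 1} s + indicator {- real n - x .. (- real n - x) + 1} s
      + indicator {x - real n .. (x - real n) + 1} s + indicator {x + (real n - 1) .. (x + (real n - 1)) + 1} s)) = BDi n x"
    unfolding BDi_def by (intro ext) (simp add: algebra_simps)
  ultimately show ?thesis by simp
qed

end


definition BD :: "real \<Rightarrow> nat \<Rightarrow> real \<Rightarrow> real \<Rightarrow> real" where
  "BD \<alpha> n x s = 120 * (indicator {-1..1} s * \<bar>s\<bar> powr (1-\<alpha>)) + BDi n x s"

definition Btot :: "real \<Rightarrow> real" where "Btot \<alpha> = 120 * (2 * (1 powr (1 - \<alpha> + 1) / (1 - \<alpha> + 1))) + 60"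

context fixes n :: nat and x :: real and \<alpha> :: real assumes n: "n \<ge> 1" and a0: "0 < \<alpha>" and a2: "\<alpha> < 2"
begin

lemma BDi_nonneg: "0 \<le> BDi n x s"
  using DD_ind[OF n, of x s] by linarith

lemma BD_int: "has_bochner_integral lborel (BD \<alpha> n x) (Btot \<alpha>)"
  unfolding BD_def[abs_def] Btot_def
  by (intro has_bochner_integral_add has_bochner_integral_mult_right E_zero BDi_int[OF n]) (use a2 in auto)

lemma BD_nonneg: "0 \<le> BD \<alpha> n x s"
  unfolding BD_def using BDi_nonneg by (auto intro!: add_nonneg_nonneg mult_nonneg_nonneg)

lemma BD_bound: assumes s: "s > 0" shows "\<bar>DD n x s\<bar> * s powr (-\<alpha>) \<le> BD \<alpha> n x s" "\<bar>DD n x s\<bar> \<le> BD \<alpha> n x s"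
proof -
  have bi: "\<bar>DD n x s\<bar> \<le> BDi n x s" by (rule DD_ind[OF n])
  have bl: "\<bar>DD n x s\<bar> \<le> 120 * s" using DD_lin[OF n, of x s] s by simp
  have "\<bar>DD n x s\<bar> * s powr (-\<alpha>) \<le> BD \<alpha> n x s \<and> \<bar>DD n x s\<bar> \<le> BD \<alpha> n x s"
  proof (cases "s \<le> 1")
    case True
    have e: "s * s powr (-\<alpha>) = s powr (1-\<alpha>)" using s by (simp add: powr_diff powr_minus_divide)
    have "\<bar>DD n x s\<bar> * s powr (-\<alpha>) \<le> 120 * s * s powr (-\<alpha>)" using bl by (simp add: mult_right_mono)
    also have "\<dots> = 120 * s powr (1-\<alpha>)" using e by simp
    finally have 1: "\<bar>DD n x s\<bar> * s powr (-\<alpha>) \<le> 120 * s powr (1-\<alpha>)" .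
    have "s = s powr 1" using s by simp
    also have "\<dots> \<le> s powr (1-\<alpha>)" using True s a0 by (intro powr_mono') auto
    finally have 2: "\<bar>DD n x s\<bar> \<le> 120 * s powr (1-\<alpha>)" using bl by linarith
    have "0 \<le> BDi n x s" by (rule BDi_nonneg)
    then show ?thesis using 1 2 True s unfolding BD_def by (auto simp: indicator_def)
  next
    case False
    have "1 \<le> s powr \<alpha>" using False a0 ge_one_powr_ge_zero[of s \<alpha>] by simp
    then have "s powr (-\<alpha>) \<le> 1" by (simp add: powr_minus_divide divide_le_eq)
    then have "\<bar>DD n x s\<bar> * s powr (-\<alpha>) \<le> \<bar>DD n x s\<bar>" by (simp add: mult_left_le)
    moreover have "0 \<le> indicator {-1..1} s * \<bar>s\<bar> powr (1-\<alpha>)" by auto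
    ultimately show ?thesis using bi unfolding BD_def by linarith
  qed
  then show "\<bar>DD n x s\<bar> * s powr (-\<alpha>) \<le> BD \<alpha> n x s" "\<bar>DD n x s\<bar> \<le> BD \<alpha> n x s" by auto
qed

end


definition kk :: "nat \<Rightarrow> real \<Rightarrow> real \<Rightarrow> real \<Rightarrow> real" where
  "kk n x \<alpha> h = (fn n (x+h) - fn n x - f1 n x * h * indicator {-1..1} h) / \<bar>h\<bar> powr (1+\<alpha>)"
definition mm :: "real \<Rightarrow> real \<Rightarrow> real" where
  "mm \<alpha> h = 120 * (indicator {-1..1} h * \<bar>h\<bar> powr (1-\<alpha>)) + indicator {h. 1 \<le> \<bar>h\<bar>} h / \<bar>h\<bar> powr (1+\<alpha>)"

context fixes n :: nat and x :: real and \<alpha> :: real assumes n: "n \<ge> 1" and a0: "0 < \<alpha>" and a2: "\<alpha> < 2"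
begin

lemma taylor: "\<bar>fn n (x+h) - fn n x - f1 n x * h\<bar> \<le> 120 * h^2"
proof -
  define r where "r t = fn n (x+t) - f1 n x * t" for t
  have rd: "(r has_real_derivative (f1 n (x+t) - f1 n x)) (at t)" for t
    unfolding r_def[abs_def]
    by (auto intro!: derivative_eq_intros DERIV_chain2[OF fn_deriv[OF n]])
  obtain z where z: "min 0 h \<le> z" "z \<le> max 0 h" "r h - r 0 = (h - 0) * (f1 n (x+z) - f1 n x)"
    using mvt_real[OF rd, of 0 h] by blast
  have "\<bar>f1 n (x+z) - f1 n x\<bar> \<le> 120 * \<bar>(x+z) - x\<bar>"
    by (rule lip_real[OF f1_deriv f2_bound])
  also have "\<dots> \<le> 120 * \<bar>h\<bar>" using z(1,2) by (auto simp: min_def max_def split: if_splits)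
  finally have b: "\<bar>f1 n (x+z) - f1 n x\<bar> \<le> 120 * \<bar>h\<bar>" .
  have "fn n (x+h) - fn n x - f1 n x * h = h * (f1 n (x+z) - f1 n x)"
    using z(3) by (simp add: r_def algebra_simps)
  then have "\<bar>fn n (x+h) - fn n x - f1 n x * h\<bar> = \<bar>h\<bar> * \<bar>f1 n (x+z) - f1 n x\<bar>"
    by (simp add: abs_mult)
  also have "\<dots> \<le> \<bar>h\<bar> * (120 * \<bar>h\<bar>)" using b by (simp add: mult_left_mono)
  also have "\<dots> = 120 * h^2" by (simp add: power2_eq_square abs_mult_self_eq)
  finally show ?thesis .
qed

lemma mm_int: "integrable lborel (mm \<alpha>)"
proof -
  have "has_bochner_integral lborel (mm \<alpha>) (120 * (2 * (1 powr (1-\<alpha>+1) / (1-\<alpha>+1))) + 2 * (1 powr (-\<alpha>) / \<alpha>))"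
    unfolding mm_def[abs_def]
    by (intro has_bochner_integral_add has_bochner_integral_mult_right E_zero E_inf) (use a0 a2 in auto)
  then show ?thesis by (rule integrable.intros)
qed

lemma kk_bound: "\<bar>kk n x \<alpha> h\<bar> \<le> mm \<alpha> h"
proof -
  have m1: "0 \<le> indicator {h. 1 \<le> \<bar>h\<bar>} h / \<bar>h\<bar> powr (1+\<alpha>)" by auto
  have m2: "0 \<le> 120 * (indicator {-1..1} h * \<bar>h\<bar> powr (1-\<alpha>))" by auto
  consider "h = 0" | "h \<noteq> 0 \<and> \<bar>h\<bar> \<le> 1" | "\<bar>h\<bar> > 1" by linarith
  then show ?thesis
  proof cases
    case 1 then show ?thesis using m1 m2 by (simp add: kk_def mm_def)
  next
    case 2
    then have hp: "\<bar>h\<bar> > 0" by auto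
    have "\<bar>kk n x \<alpha> h\<bar> = \<bar>fn n (x+h) - fn n x - f1 n x * h\<bar> / \<bar>h\<bar> powr (1+\<alpha>)"
      using 2 by (simp add: kk_def indicator_def abs_le_iff)
    also have "\<dots> \<le> 120 * h^2 / \<bar>h\<bar> powr (1+\<alpha>)"
      by (intro divide_right_mono taylor) auto
    also have "120 * h^2 / \<bar>h\<bar> powr (1+\<alpha>) = 120 * \<bar>h\<bar> powr (1-\<alpha>)"
    proof -
      have "h^2 = \<bar>h\<bar> powr 2" using hp by (simp add: powr_numeral)
      moreover have "\<bar>h\<bar> powr 2 / \<bar>h\<bar> powr (1+\<alpha>) = \<bar>h\<bar> powr (1-\<alpha>)"
        using powr_diff[of "\<bar>h\<bar>" 2 "1+\<alpha>"] by simp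
      ultimately show ?thesis by simp
    qed
    also have "\<dots> \<le> mm \<alpha> h" using 2 m1 by (simp add: mm_def indicator_def abs_le_iff)
    finally show ?thesis .
  next
    case 3
    have "\<bar>kk n x \<alpha> h\<bar> = \<bar>fn n (x+h) - fn n x\<bar> / \<bar>h\<bar> powr (1+\<alpha>)"
    proof -
      have "h \<notin> {-1..1}" using 3 by auto
      then show ?thesis by (simp add: kk_def)
    qed
    also have "\<dots> \<le> 1 / \<bar>h\<bar> powr (1+\<alpha>)"
      using fn_range[of n "x+h"] fn_range[of n x] by (intro divide_right_mono) auto
    also have "\<dots> = mm \<alpha> h" using 3 by (simp add: mm_def indicator_def abs_if split: if_splits)
    finally show ?thesis .
  qed
qed

end


context fixes n :: nat and x :: real and \<alpha> :: real assumes n: "n \<ge> 1" and a0: "0 < \<alpha>" and a2: "\<alpha> < 2"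
begin

lemma kk_meas: "kk n x \<alpha> \<in> borel_measurable lborel"
proof -
  have [measurable]: "fn n \<in> borel_measurable borel" by (rule meas_fn[OF n])
  show ?thesis unfolding kk_def[abs_def] by measurable
qed

lemma kk_int: "integrable lborel (kk n x \<alpha>)"
  by (rule Bochner_Integration.integrable_bound[OF mm_int[OF n a0 a2] kk_meas])
     (auto intro!: AE_I2 order_trans[OF kk_bound[OF n a0 a2]])

lemma frac_repr: "frac_lap \<alpha> (fn n) x = (\<integral>h. (1 / \<bar>h\<bar> powr (1+\<alpha>)) * GG n x h \<partial>lborel)"
proof -
  have fl: "frac_lap \<alpha> (fn n) x = integral\<^sup>L lborel (kk n x \<alpha>)"
    unfolding frac_lap_def deriv_fn[OF n] kk_def ..
  have i1: "integrable lborel (\<lambda>h. kk n x \<alpha> (0 + (-1) * h))"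
    using lborel_integrable_real_affine_iff[of "-1" "kk n x \<alpha>" 0] kk_int by simp
  have e1: "integral\<^sup>L lborel (kk n x \<alpha>) = (\<integral>h. kk n x \<alpha> (0 + (-1) * h) \<partial>lborel)"
    using lborel_integral_real_affine[of "-1" "kk n x \<alpha>" 0] by simp
  have eq: "(kk n x \<alpha> h + kk n x \<alpha> (0 + (-1) * h)) / 2 = (1 / \<bar>h\<bar> powr (1+\<alpha>)) * GG n x h" for h
  proof -
    have ineg: "indicator {-1..1} (-h) = (indicator {-1..1} h :: real)" by (auto simp: indicator_def)
    have k1: "kk n x \<alpha> h = (fn n (x+h) - fn n x - f1 n x * h * indicator {-1..1} h) * (1 / \<bar>h\<bar> powr (1+\<alpha>))"
      by (simp add: kk_def)
    have k2: "kk n x \<alpha> (0 + (-1) * h) = (fn n (x-h) - fn n x + f1 n x * h * indicator {-1..1} h) * (1 / \<bar>h\<bar> powr (1+\<alpha>))"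
      by (simp add: kk_def ineg)
    have gen: "\<And>A B C D q::real. ((A - B - C) * q + (D - B + C) * q) / 2 = q * ((A + D)/2 - B)"
      by (simp add: field_simps)
    show ?thesis unfolding k1 k2 GG_def by (rule gen)
  qed
  have "integral\<^sup>L lborel (kk n x \<alpha>) = (\<integral>h. (kk n x \<alpha> h + kk n x \<alpha> (0 + (-1) * h)) / 2 \<partial>lborel)"
    using e1 kk_int i1 by (simp add: Bochner_Integration.integral_add)
  moreover have "(\<lambda>h. (kk n x \<alpha> h + kk n x \<alpha> (0 + (-1) * h)) / 2) = (\<lambda>h. (1 / \<bar>h\<bar> powr (1+\<alpha>)) * GG n x h)"
    by (rule ext) (rule eq)
  ultimately show ?thesis using fl by (simp only:)
qed

lemma inner_leb: "s > 0 \<Longrightarrow> (\<integral>h. (1 / \<bar>h\<bar> powr (1+\<alpha>)) * indicator {h. s \<le> \<bar>h\<bar>} h \<partial>lborel) = 2 * (s powr (-\<alpha>) / \<alpha>)"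
  "s > 0 \<Longrightarrow> (\<integral>\<^sup>+h. ennreal ((1 / \<bar>h\<bar> powr (1+\<alpha>)) * indicator {h. s \<le> \<bar>h\<bar>} h) \<partial>lborel) = ennreal (2 * (s powr (-\<alpha>) / \<alpha>))"
proof -
  assume s: "s > 0"
  have hb: "has_bochner_integral lborel (\<lambda>h. (1 / \<bar>h\<bar> powr (1+\<alpha>)) * indicator {h. s \<le> \<bar>h\<bar>} h) (2 * (s powr (-\<alpha>) / \<alpha>))"
    using E_inf[OF s a0] by simp
  then show "(\<integral>h. (1 / \<bar>h\<bar> powr (1+\<alpha>)) * indicator {h. s \<le> \<bar>h\<bar>} h \<partial>lborel) = 2 * (s powr (-\<alpha>) / \<alpha>)"
    by (rule has_bochner_integral_integral_eq)
  show "(\<integral>\<^sup>+h. ennreal ((1 / \<bar>h\<bar> powr (1+\<alpha>)) * indicator {h. s \<le> \<bar>h\<bar>} h) \<partial>lborel) = ennreal (2 * (s powr (-\<alpha>) / \<alpha>))"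
    using nn_integral_eq_integral[OF integrable.intros[OF hb]] has_bochner_integral_integral_eq[OF hb] by simp
qed

lemma frac_fub: "frac_lap \<alpha> (fn n) x = (\<integral>s. DD n x s * indicator {0<..} s * (2 * (s powr (-\<alpha>) / \<alpha>)) \<partial>lborel)"
proof -
  have fin: "(\<integral>\<^sup>+s. ennreal (\<bar>DD n x s\<bar> * indicator {0<..} s) * (\<integral>\<^sup>+h. ennreal ((1 / \<bar>h\<bar> powr (1+\<alpha>)) * indicator {h. s \<le> \<bar>h\<bar>} h) \<partial>lborel) \<partial>lborel) < \<infinity>"
  proof -
    have "(\<integral>\<^sup>+s. ennreal (\<bar>DD n x s\<bar> * indicator {0<..} s) * (\<integral>\<^sup>+h. ennreal ((1 / \<bar>h\<bar> powr (1+\<alpha>)) * indicator {h. s \<le> \<bar>h\<bar>} h) \<partial>lborel) \<partial>lborel)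
       \<le> (\<integral>\<^sup>+s. ennreal (2 / \<alpha> * BD \<alpha> n x s) \<partial>lborel)"
    proof (intro nn_integral_mono)
      fix s :: real
      show "ennreal (\<bar>DD n x s\<bar> * indicator {0<..} s) * (\<integral>\<^sup>+h. ennreal ((1 / \<bar>h\<bar> powr (1+\<alpha>)) * indicator {h. s \<le> \<bar>h\<bar>} h) \<partial>lborel)
        \<le> ennreal (2 / \<alpha> * BD \<alpha> n x s)"
      proof (cases "s > 0")
        case True
        have "\<bar>DD n x s\<bar> * (2 * (s powr (-\<alpha>) / \<alpha>)) = 2 / \<alpha> * (\<bar>DD n x s\<bar> * s powr (-\<alpha>))" by simp
        also have "\<dots> \<le> 2 / \<alpha> * BD \<alpha> n x s" using BD_bound[OF n a0 a2 True] a0 by (intro mult_left_mono) auto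
        finally have le: "\<bar>DD n x s\<bar> * (2 * (s powr (-\<alpha>) / \<alpha>)) \<le> 2 / \<alpha> * BD \<alpha> n x s" .
        have "ennreal (\<bar>DD n x s\<bar> * indicator {0<..} s) * ennreal (2 * (s powr (-\<alpha>) / \<alpha>)) = ennreal (\<bar>DD n x s\<bar> * (2 * (s powr (-\<alpha>) / \<alpha>)))"
          using True a0 by (simp add: ennreal_mult[symmetric])
        then show ?thesis using inner_leb(2)[OF True] le by (simp add: ennreal_leI)
      qed auto
    qed
    also have "\<dots> = ennreal (2 / \<alpha> * Btot \<alpha>)"
    proof -
      have ib: "has_bochner_integral lborel (\<lambda>s. 2 / \<alpha> * BD \<alpha> n x s) (2 / \<alpha> * Btot \<alpha>)"
        by (rule has_bochner_integral_mult_right[OF BD_int[OF n a0 a2]])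
      have "(\<integral>\<^sup>+s. ennreal (2 / \<alpha> * BD \<alpha> n x s) \<partial>lborel) = ennreal (integral\<^sup>L lborel (\<lambda>s. 2 / \<alpha> * BD \<alpha> n x s))"
        by (rule nn_integral_eq_integral[OF integrable.intros[OF ib]]) (use BD_nonneg[OF n a0 a2] a0 in auto)
      also have "\<dots> = ennreal (2 / \<alpha> * Btot \<alpha>)" using has_bochner_integral_integral_eq[OF ib] a0 by simp
      finally show ?thesis .
    qed
    finally show ?thesis by (simp add: order_le_less_trans)
  qed
  have sf: "sigma_finite_measure (lborel :: real measure)" by (rule sigma_finite_lborel)
  have L: "(\<integral>h. (1 / \<bar>h\<bar> powr (1+\<alpha>)) * (\<integral>s. DD n x s * indicator {0<..\<bar>h\<bar>} s \<partial>lborel) \<partial>lborel)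
       = (\<integral>s. DD n x s * indicator {0<..} s * (\<integral>h. (1 / \<bar>h\<bar> powr (1+\<alpha>)) * indicator {h. s \<le> \<bar>h\<bar>} h \<partial>lborel) \<partial>lborel)"
    by (rule layer(2)[OF sf sets_lborel _ _ meas_DD[OF n] fin]) auto
  have "frac_lap \<alpha> (fn n) x = (\<integral>h. (1 / \<bar>h\<bar> powr (1+\<alpha>)) * (\<integral>s. DD n x s * indicator {0<..\<bar>h\<bar>} s \<partial>lborel) \<partial>lborel)"
    unfolding frac_repr GG_int[OF n] ..
  also have "\<dots> = (\<integral>s. DD n x s * indicator {0<..} s * (2 * (s powr (-\<alpha>) / \<alpha>)) \<partial>lborel)"
    unfolding L
  proof (intro Bochner_Integration.integral_cong refl)
    fix s :: real
    show "DD n x s * indicator {0<..} s * (\<integral>h. (1 / \<bar>h\<bar> powr (1+\<alpha>)) * indicator {h. s \<le> \<bar>h\<bar>} h \<partial>lborel)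
       = DD n x s * indicator {0<..} s * (2 * (s powr (-\<alpha>) / \<alpha>))"
    proof (cases "s > 0")
      case True then show ?thesis by (simp only: inner_leb(1)[OF True])
    qed (simp add: indicator_def)
  qed
  finally show ?thesis .
qed

end


context fixes n :: nat and x :: real and \<alpha> :: real assumes n: "n \<ge> 1" and a0: "0 < \<alpha>" and a2: "\<alpha> < 2"
begin

lemma fub_bound: "\<bar>DD n x s * indicator {0<..} s * (2 * (s powr (-\<alpha>) / \<alpha>))\<bar> \<le> 2 / \<alpha> * BD \<alpha> n x s"
proof (cases "s > 0")
  case True
  have "\<bar>DD n x s * indicator {0<..} s * (2 * (s powr (-\<alpha>) / \<alpha>))\<bar> = 2 / \<alpha> * (\<bar>DD n x s\<bar> * s powr (-\<alpha>))"
    using True a0 by (simp add: abs_mult)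
  also have "\<dots> \<le> 2 / \<alpha> * BD \<alpha> n x s" using BD_bound[OF n a0 a2 True] a0 by (intro mult_left_mono) auto
  finally show ?thesis .
qed (use BD_nonneg[OF n a0 a2] a0 in simp)

lemma fub_int: "integrable lborel (\<lambda>s. DD n x s * indicator {0<..} s * (2 * (s powr (-\<alpha>) / \<alpha>)))"
proof (rule Bochner_Integration.integrable_bound)
  show "integrable lborel (\<lambda>s. 2 / \<alpha> * BD \<alpha> n x s)"
    by (rule integrable.intros[OF has_bochner_integral_mult_right[OF BD_int[OF n a0 a2]]])
  have [measurable]: "DD n x \<in> borel_measurable borel" by (rule meas_DD[OF n])
  show "(\<lambda>s. DD n x s * indicator {0<..} s * (2 * (s powr (-\<alpha>) / \<alpha>))) \<in> borel_measurable lborel"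
    by measurable
  show "AE s in lborel. norm (DD n x s * indicator {0<..} s * (2 * (s powr (-\<alpha>) / \<alpha>))) \<le> norm (2 / \<alpha> * BD \<alpha> n x s)"
  proof (intro AE_I2)
    fix s
    have "0 \<le> 2 / \<alpha> * BD \<alpha> n x s" using BD_nonneg[OF n a0 a2] a0 by simp
    then show "norm (DD n x s * indicator {0<..} s * (2 * (s powr (-\<alpha>) / \<alpha>))) \<le> norm (2 / \<alpha> * BD \<alpha> n x s)"
      using fub_bound[of s] unfolding real_norm_def by linarith
  qed
qed

lemma frac_bound: "\<bar>frac_lap \<alpha> (fn n) x\<bar> \<le> 2 / \<alpha> * Btot \<alpha>"
proof -
  have ib: "has_bochner_integral lborel (\<lambda>s. 2 / \<alpha> * BD \<alpha> n x s) (2 / \<alpha> * Btot \<alpha>)"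
    by (rule has_bochner_integral_mult_right[OF BD_int[OF n a0 a2]])
  have "\<bar>frac_lap \<alpha> (fn n) x\<bar> \<le> (\<integral>s. 2 / \<alpha> * BD \<alpha> n x s \<partial>lborel)"
    unfolding frac_fub[OF n a0 a2]
    by (rule integral_abs_bound_integral[OF fub_int integrable.intros[OF ib] fub_bound])
  also have "\<dots> = 2 / \<alpha> * Btot \<alpha>" by (rule has_bochner_integral_integral_eq[OF ib])
  finally show ?thesis .
qed

lemma local_bound: assumes x: "\<bar>x\<bar> < real n - 1"
  shows "\<bar>frac_lap \<alpha> (fn n) x\<bar> \<le> 2 / (\<alpha> * (real n - 1 - \<bar>x\<bar>) powr \<alpha>)"
proof -
  define d where "d = real n - 1 - \<bar>x\<bar>"
  have d: "d > 0" using x by (simp add: d_def)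
  have fx: "fn n x = 0" using x by (simp add: fn_def psi01 cl_def[symmetric] cl_lt0)
  have f1x: "f1 n x = 0" using x by (simp add: f1_def phi1_def cl_lt0 dpsi_def)
  have fl: "frac_lap \<alpha> (fn n) x = integral\<^sup>L lborel (kk n x \<alpha>)"
    unfolding frac_lap_def deriv_fn[OF n] kk_def ..
  have kk0: "0 \<le> kk n x \<alpha> h" for h
    using fn_range[of n "x+h"] by (simp add: kk_def fx f1x)
  have kkb: "kk n x \<alpha> h \<le> indicator {h. d \<le> \<bar>h\<bar>} h / \<bar>h\<bar> powr (1+\<alpha>)" for h
  proof (cases "d \<le> \<bar>h\<bar>")
    case True then show ?thesis using fn_range[of n "x+h"] by (simp add: kk_def fx f1x divide_right_mono)
  next
    case False
    then have "\<bar>x + h\<bar> \<le> real n - 1" unfolding d_def by linarith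
    then have "fn n (x+h) = 0" by (simp add: fn_def psi01 cl_def[symmetric] cl_lt0)
    then show ?thesis using False by (simp add: kk_def fx f1x)
  qed
  have "integral\<^sup>L lborel (kk n x \<alpha>) \<le> (\<integral>h. indicator {h. d \<le> \<bar>h\<bar>} h / \<bar>h\<bar> powr (1+\<alpha>) \<partial>lborel)"
    by (rule integral_mono[OF kk_int[OF n a0 a2] integrable.intros[OF E_inf[OF d a0]] kkb])
  also have "\<dots> = 2 * (d powr (-\<alpha>) / \<alpha>)" by (rule has_bochner_integral_integral_eq[OF E_inf[OF d a0]])
  also have "\<dots> = 2 / (\<alpha> * d powr \<alpha>)" by (simp add: powr_minus_divide)
  finally have "integral\<^sup>L lborel (kk n x \<alpha>) \<le> 2 / (\<alpha> * d powr \<alpha>)" .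
  moreover have "0 \<le> integral\<^sup>L lborel (kk n x \<alpha>)" using kk0 by simp
  ultimately show ?thesis using fl by (simp add: d_def)
qed

end


context fixes n :: nat and x :: real and \<alpha> :: real assumes n: "n \<ge> 1" and a0: "0 < \<alpha>" and a2: "\<alpha> < 2"
begin

lemma DD_BD: "\<bar>DD n x s\<bar> * indicator {0<..} s \<le> BD \<alpha> n x s"
  using BD_bound(2)[OF n a0 a2, of s] BD_nonneg[OF n a0 a2, where s=s] by (cases "s > 0") auto

lemma prob_layer:
  fixes \<nu> :: "real measure"
  assumes P: "prob_space \<nu>" and sets: "sets \<nu> = sets borel" and sym: "distr \<nu> borel uminus = \<nu>"
  shows "(\<integral>h. fn n (x+h) - fn n x \<partial>\<nu>) = (\<integral>s. DD n x s * indicator {0<..} s * measure \<nu> {h. s \<le> \<bar>h\<bar>} \<partial>lborel)"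
proof -
  interpret prob_space \<nu> by (rule P)
  note sets[measurable_cong]
  have [measurable]: "fn n \<in> borel_measurable borel" by (rule meas_fn[OF n])
  have gm: "(\<lambda>h. fn n (x+h) - fn n x) \<in> borel_measurable \<nu>" by measurable
  have gb: "\<bar>fn n (x+h) - fn n x\<bar> \<le> 1" for h using fn_range[of n "x+h"] fn_range[of n x] by linarith
  have gi: "integrable \<nu> (\<lambda>h. fn n (x+h) - fn n x)"
    by (rule integrable_const_bound[where B=1, OF _ gm]) (auto intro!: AE_I2 simp: gb)
  have gmi: "integrable \<nu> (\<lambda>h. fn n (x+(-h)) - fn n x)"
    by (rule integrable_const_bound[where B=1]) (auto intro!: AE_I2 simp: gb[of "-_", simplified])
  have s1: "(\<integral>h. fn n (x+h) - fn n x \<partial>\<nu>) = (\<integral>h. fn n (x+(-h)) - fn n x \<partial>\<nu>)"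
  proof -
    have "(\<integral>h. fn n (x+h) - fn n x \<partial>\<nu>) = (\<integral>h. fn n (x+h) - fn n x \<partial>(distr \<nu> borel uminus))"
      using sym by simp
    also have "\<dots> = (\<integral>h. fn n (x+(-h)) - fn n x \<partial>\<nu>)"
      by (rule integral_distr) measurable
    finally show ?thesis .
  qed
  have s2: "(\<integral>h. fn n (x+h) - fn n x \<partial>\<nu>) = (\<integral>h. 1 * (\<integral>s. DD n x s * indicator {0<..\<bar>h\<bar>} s \<partial>lborel) \<partial>\<nu>)"
  proof -
    have "(\<integral>h. fn n (x+h) - fn n x \<partial>\<nu>) = (\<integral>h. ((fn n (x+h) - fn n x) + (fn n (x+(-h)) - fn n x)) / 2 \<partial>\<nu>)"
    proof -
      have e: "(\<integral>h. ((fn n (x+h) - fn n x) + (fn n (x+(-h)) - fn n x)) / 2 \<partial>\<nu>)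
          = ((\<integral>h. fn n (x+h) - fn n x \<partial>\<nu>) + (\<integral>h. fn n (x+(-h)) - fn n x \<partial>\<nu>)) / 2"
        by (simp only: integral_divide_zero Bochner_Integration.integral_add[OF gi gmi])
      show ?thesis unfolding e s1[symmetric] by simp
    qed
    also have "\<dots> = (\<integral>h. GG n x h \<partial>\<nu>)"
      by (intro Bochner_Integration.integral_cong) (auto simp: GG_def field_simps)
    also have "\<dots> = (\<integral>h. 1 * (\<integral>s. DD n x s * indicator {0<..\<bar>h\<bar>} s \<partial>lborel) \<partial>\<nu>)"
      using GG_int[OF n] by simp
    finally show ?thesis .
  qed
  have fin: "(\<integral>\<^sup>+s. ennreal (\<bar>DD n x s\<bar> * indicator {0<..} s) * (\<integral>\<^sup>+h. ennreal (1 * indicator {h. s \<le> \<bar>h\<bar>} h) \<partial>\<nu>) \<partial>lborel) < \<infinity>"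
  proof -
    have "(\<integral>\<^sup>+s. ennreal (\<bar>DD n x s\<bar> * indicator {0<..} s) * (\<integral>\<^sup>+h. ennreal (1 * indicator {h. s \<le> \<bar>h\<bar>} h) \<partial>\<nu>) \<partial>lborel)
       \<le> (\<integral>\<^sup>+s. ennreal (BD \<alpha> n x s) \<partial>lborel)"
    proof (intro nn_integral_mono)
      fix s :: real
      have "(\<integral>\<^sup>+h. ennreal (1 * indicator {h. s \<le> \<bar>h\<bar>} h) \<partial>\<nu>) = emeasure \<nu> {h. s \<le> \<bar>h\<bar>}"
        by (simp add: nn_integral_indicator[symmetric] sets ennreal_indicator del: nn_integral_indicator)
      also have "\<dots> \<le> 1" by (rule emeasure_le_1)
      finally have le1: "(\<integral>\<^sup>+h. ennreal (1 * indicator {h. s \<le> \<bar>h\<bar>} h) \<partial>\<nu>) \<le> 1" .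
      have "ennreal (\<bar>DD n x s\<bar> * indicator {0<..} s) * (\<integral>\<^sup>+h. ennreal (1 * indicator {h. s \<le> \<bar>h\<bar>} h) \<partial>\<nu>)
          \<le> ennreal (\<bar>DD n x s\<bar> * indicator {0<..} s) * 1"
        by (rule mult_left_mono[OF le1]) simp
      also have "\<dots> \<le> ennreal (BD \<alpha> n x s)" using DD_BD[of s] by (simp add: ennreal_leI)
      finally show "ennreal (\<bar>DD n x s\<bar> * indicator {0<..} s) * (\<integral>\<^sup>+h. ennreal (1 * indicator {h. s \<le> \<bar>h\<bar>} h) \<partial>\<nu>) \<le> ennreal (BD \<alpha> n x s)" .
    qed
    also have "\<dots> = ennreal (Btot \<alpha>)"
      using nn_integral_eq_integral[OF integrable.intros[OF BD_int[OF n a0 a2]]] has_bochner_integral_integral_eq[OF BD_int[OF n a0 a2]]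
        BD_nonneg[OF n a0 a2] by simp
    finally show ?thesis by (simp add: order_le_less_trans)
  qed
  have L: "(\<integral>h. 1 * (\<integral>s. DD n x s * indicator {0<..\<bar>h\<bar>} s \<partial>lborel) \<partial>\<nu>)
     = (\<integral>s. DD n x s * indicator {0<..} s * (\<integral>h. 1 * indicator {h. s \<le> \<bar>h\<bar>} h \<partial>\<nu>) \<partial>lborel)"
    by (rule layer(2)[OF prob_space_imp_sigma_finite[OF P] sets _ _ meas_DD[OF n] fin]) auto
  have inner: "(\<integral>h. 1 * indicator {h. s \<le> \<bar>h\<bar>} h \<partial>\<nu>) = measure \<nu> {h. s \<le> \<bar>h\<bar>}" for s
  proof -
    have "{h. s \<le> \<bar>h\<bar>} \<inter> space \<nu> = {h. s \<le> \<bar>h\<bar>}" using sets_eq_imp_space_eq[OF sets] by auto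
    then show ?thesis by simp
  qed
  show ?thesis unfolding s2 L inner ..
qed

end


context fixes n :: nat and x :: real and \<alpha> :: real assumes n: "n \<ge> 1" and a0: "0 < \<alpha>" and a2: "\<alpha> < 2"
begin

lemma ptwise:
  fixes c U \<delta> S \<sigma>0 :: real and Pm :: "real \<Rightarrow> real"
  assumes c: "c > 0" and U: "U > 0" and \<sigma>0: "0 \<le> \<sigma>0" "\<sigma>0 \<le> S" and \<delta>: "0 \<le> \<delta>"
    and P01: "\<And>u. 0 \<le> Pm u \<and> Pm u \<le> 1"
    and tail: "\<And>u. u \<ge> U \<Longrightarrow> \<bar>u powr \<alpha> * Pm u - 2 * \<sigma>0 / \<alpha>\<bar> \<le> \<delta>"
  shows "\<bar>DD n x s * indicator {0<..} s * (c powr \<alpha> * Pm (s * c) - \<sigma>0 * (2 * (s powr (-\<alpha>) / \<alpha>)))\<bar>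
    \<le> \<delta> * BD \<alpha> n x s + (U powr \<alpha> + 2 * S / \<alpha>) * 120 * (indicator {-(U/c)..U/c} s * \<bar>s\<bar> powr (1-\<alpha>))"
proof (cases "s > 0")
  case False
  have "0 \<le> \<delta> * BD \<alpha> n x s" using \<delta> BD_nonneg[OF n a0 a2] by simp
  moreover have "0 \<le> U powr \<alpha> + 2 * S / \<alpha>" using \<sigma>0 a0 by simp
  ultimately show ?thesis using False by simp
next
  case True
  define e where "e = (s * c) powr \<alpha> * Pm (s * c) - 2 * \<sigma>0 / \<alpha>"
  have sa: "s powr (-\<alpha>) * s powr \<alpha> = 1" using True by (simp add: powr_add[symmetric])
  have "c powr \<alpha> * Pm (s * c) - \<sigma>0 * (2 * (s powr (-\<alpha>) / \<alpha>)) = s powr (-\<alpha>) * e"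
  proof -
    have "s powr (-\<alpha>) * e = (s powr (-\<alpha>) * s powr \<alpha>) * c powr \<alpha> * Pm (s * c) - \<sigma>0 * (2 * (s powr (-\<alpha>) / \<alpha>))"
      unfolding e_def powr_mult by (simp add: algebra_simps)
    then show ?thesis using sa by simp
  qed
  then have lhs: "\<bar>DD n x s * indicator {0<..} s * (c powr \<alpha> * Pm (s * c) - \<sigma>0 * (2 * (s powr (-\<alpha>) / \<alpha>)))\<bar>
      = (\<bar>DD n x s\<bar> * s powr (-\<alpha>)) * \<bar>e\<bar>" using True by (simp add: abs_mult)
  have r0: "0 \<le> (U powr \<alpha> + 2 * S / \<alpha>) * 120 * (indicator {-(U/c)..U/c} s * \<bar>s\<bar> powr (1-\<alpha>))"
    using \<sigma>0 a0 by simp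
  have d0: "0 \<le> \<bar>DD n x s\<bar> * s powr (-\<alpha>)" by simp
  show ?thesis
  proof (cases "s * c \<ge> U")
    case True
    have "(\<bar>DD n x s\<bar> * s powr (-\<alpha>)) * \<bar>e\<bar> \<le> BD \<alpha> n x s * \<delta>"
      using tail[OF True] BD_bound(1)[OF n a0 a2 \<open>s > 0\<close>] BD_nonneg[OF n a0 a2] unfolding e_def
      by (intro mult_mono) auto
    then show ?thesis using lhs r0 by (simp add: mult.commute)
  next
    case False
    have "(s * c) powr \<alpha> \<le> U powr \<alpha>" using False True c a0 by (intro powr_mono2) auto
    then have p1: "(s * c) powr \<alpha> * Pm (s * c) \<le> U powr \<alpha> * 1"
      using P01[of "s * c"] by (intro mult_mono) auto
    have p2: "0 \<le> (s * c) powr \<alpha> * Pm (s * c)" using P01[of "s * c"] by simp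
    have p3: "2 * \<sigma>0 / \<alpha> \<le> 2 * S / \<alpha>" using \<sigma>0 a0 by (intro divide_right_mono) auto
    have p4: "0 \<le> 2 * \<sigma>0 / \<alpha>" using \<sigma>0 a0 by simp
    have eb: "\<bar>e\<bar> \<le> U powr \<alpha> + 2 * S / \<alpha>"
      unfolding e_def abs_le_iff using p1 p2 p3 p4 by linarith
    have db: "\<bar>DD n x s\<bar> * s powr (-\<alpha>) \<le> 120 * (indicator {-(U/c)..U/c} s * \<bar>s\<bar> powr (1-\<alpha>))"
    proof -
      have "s \<le> U / c" using False c by (simp add: pos_le_divide_eq)
      then have ind: "indicator {-(U/c)..U/c} s = (1::real)" using True U c by (simp add: indicator_def)
      have "\<bar>DD n x s\<bar> * s powr (-\<alpha>) \<le> 120 * s * s powr (-\<alpha>)"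
        using DD_lin[OF n, of x s] True by (intro mult_right_mono) auto
      also have "\<dots> = 120 * s powr (1-\<alpha>)"
        using True by (simp add: powr_diff powr_minus_divide)
      finally show ?thesis using ind True by simp
    qed
    have "(\<bar>DD n x s\<bar> * s powr (-\<alpha>)) * \<bar>e\<bar> \<le> (120 * (indicator {-(U/c)..U/c} s * \<bar>s\<bar> powr (1-\<alpha>))) * (U powr \<alpha> + 2 * S / \<alpha>)"
      by (rule mult_mono[OF db eb]) auto
    moreover have "0 \<le> \<delta> * BD \<alpha> n x s" using \<delta> BD_nonneg[OF n a0 a2] by simp
    moreover have "(120 * (indicator {-(U/c)..U/c} s * \<bar>s\<bar> powr (1-\<alpha>))) * (U powr \<alpha> + 2 * S / \<alpha>)
        = (U powr \<alpha> + 2 * S / \<alpha>) * 120 * (indicator {-(U/c)..U/c} s * \<bar>s\<bar> powr (1-\<alpha>))"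
      by (simp only: mult_ac)
    ultimately show ?thesis using lhs by linarith
  qed
qed

end


context fixes n :: nat and x :: real and \<alpha> :: real assumes n: "n \<ge> 1" and a0: "0 < \<alpha>" and a2: "\<alpha> < 2"
begin

lemma est:
  fixes M :: "'a measure" and X0 :: "'a \<Rightarrow> real" and c U \<delta> S \<sigma>0 :: real
  assumes P: "prob_space M" and Xm[measurable]: "X0 \<in> borel_measurable M"
    and sym: "distr M borel X0 = distr M borel (\<lambda>\<omega>. - X0 \<omega>)"
    and c: "c > 0" and U: "U > 0" and \<sigma>0: "0 \<le> \<sigma>0" "\<sigma>0 \<le> S"
    and tail: "\<And>u. u \<ge> U \<Longrightarrow> \<bar>u powr \<alpha> * measure M {\<omega>\<in>space M. \<bar>X0 \<omega>\<bar> \<ge> u} - 2 * \<sigma>0 / \<alpha>\<bar> \<le> \<delta>"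
  shows "\<bar>c powr \<alpha> * (\<integral>h. fn n (x+h) - fn n x \<partial>distr M borel (\<lambda>\<omega>. X0 \<omega> / c)) - \<sigma>0 * frac_lap \<alpha> (fn n) x\<bar>
    \<le> \<delta> * Btot \<alpha> + (U powr \<alpha> + 2 * S / \<alpha>) * 120 * (2 * ((U/c) powr (1-\<alpha>+1) / (1-\<alpha>+1)))"
proof -
  interpret prob_space M by (rule P)
  define \<nu> where "\<nu> = distr M borel (\<lambda>\<omega>. X0 \<omega> / c)"
  define Pm where "Pm u = measure M {\<omega>\<in>space M. \<bar>X0 \<omega>\<bar> \<ge> u}" for u
  have Ym: "(\<lambda>\<omega>. X0 \<omega> / c) \<in> measurable M borel" by measurable
  have P\<nu>: "prob_space \<nu>" unfolding \<nu>_def by (rule prob_space_distr[OF Ym])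
  have sets\<nu>: "sets \<nu> = sets borel" unfolding \<nu>_def by simp
  have sym\<nu>: "distr \<nu> borel uminus = \<nu>"
  proof -
    have "distr \<nu> borel uminus = distr M borel (uminus \<circ> (\<lambda>\<omega>. X0 \<omega> / c))"
      unfolding \<nu>_def by (rule distr_distr) measurable
    also have "uminus \<circ> (\<lambda>\<omega>. X0 \<omega> / c) = (\<lambda>y. y / c) \<circ> (\<lambda>\<omega>. - X0 \<omega>)" by (auto simp: fun_eq_iff)
    also have "distr M borel ((\<lambda>y. y / c) \<circ> (\<lambda>\<omega>. - X0 \<omega>)) = distr (distr M borel (\<lambda>\<omega>. - X0 \<omega>)) borel (\<lambda>y. y / c)"
      by (rule distr_distr[symmetric]) measurable
    also have "\<dots> = distr (distr M borel X0) borel (\<lambda>y. y / c)" by (simp only: sym)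
    also have "\<dots> = distr M borel ((\<lambda>y. y / c) \<circ> X0)" by (rule distr_distr) measurable
    also have "\<dots> = \<nu>" unfolding \<nu>_def by (simp add: comp_def)
    finally show ?thesis .
  qed
  have meas\<nu>: "measure \<nu> {h. s \<le> \<bar>h\<bar>} = Pm (s * c)" for s
  proof -
    have "measure \<nu> {h. s \<le> \<bar>h\<bar>} = measure M ((\<lambda>\<omega>. X0 \<omega> / c) -` {h. s \<le> \<bar>h\<bar>} \<inter> space M)"
      unfolding \<nu>_def by (rule measure_distr[OF Ym]) measurable
    also have "(\<lambda>\<omega>. X0 \<omega> / c) -` {h. s \<le> \<bar>h\<bar>} \<inter> space M = {\<omega>\<in>space M. \<bar>X0 \<omega>\<bar> \<ge> s * c}"
      using c by (auto simp: pos_le_divide_eq)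
    finally show ?thesis by (simp add: Pm_def)
  qed
  have P01: "0 \<le> Pm u \<and> Pm u \<le> 1" for u by (simp add: Pm_def)
  have \<delta>: "0 \<le> \<delta>" using tail[of U] by simp
  have Pm_meas[measurable]: "(\<lambda>s. Pm (s * c)) \<in> borel_measurable borel"
  proof -
    have "mono (\<lambda>s. - Pm (s * c))"
    proof (rule monoI)
      fix s t :: real assume "s \<le> t"
      then have "{\<omega>\<in>space M. \<bar>X0 \<omega>\<bar> \<ge> t * c} \<subseteq> {\<omega>\<in>space M. \<bar>X0 \<omega>\<bar> \<ge> s * c}"
        using c by (auto intro: order_trans[OF mult_right_mono])
      then have "Pm (t * c) \<le> Pm (s * c)" unfolding Pm_def by (intro finite_measure_mono) measurable
      then show "- Pm (s * c) \<le> - Pm (t * c)" by simp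
    qed
    then have "(\<lambda>s. - Pm (s * c)) \<in> borel_measurable borel" by (rule borel_measurable_mono)
    then have "(\<lambda>s. - (- Pm (s * c))) \<in> borel_measurable borel" by measurable
    then show ?thesis by simp
  qed
  have [measurable]: "DD n x \<in> borel_measurable borel" by (rule meas_DD[OF n])
  have A: "c powr \<alpha> * (\<integral>h. fn n (x+h) - fn n x \<partial>\<nu>) = (\<integral>s. DD n x s * indicator {0<..} s * (c powr \<alpha> * Pm (s * c)) \<partial>lborel)"
    unfolding prob_layer[OF n a0 a2 P\<nu> sets\<nu> sym\<nu>] meas\<nu>
    by (simp add: mult_ac)
  have Ai: "integrable lborel (\<lambda>s. DD n x s * indicator {0<..} s * (c powr \<alpha> * Pm (s * c)))"
  proof (rule Bochner_Integration.integrable_bound)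
    show "integrable lborel (\<lambda>s. c powr \<alpha> * BD \<alpha> n x s)"
      by (rule integrable.intros[OF has_bochner_integral_mult_right[OF BD_int[OF n a0 a2]]])
    show "(\<lambda>s. DD n x s * indicator {0<..} s * (c powr \<alpha> * Pm (s * c))) \<in> borel_measurable lborel" by measurable
    show "AE s in lborel. norm (DD n x s * indicator {0<..} s * (c powr \<alpha> * Pm (s * c))) \<le> norm (c powr \<alpha> * BD \<alpha> n x s)"
    proof (intro AE_I2)
      fix s
      have "\<bar>DD n x s * indicator {0<..} s * (c powr \<alpha> * Pm (s * c))\<bar> = (\<bar>DD n x s\<bar> * indicator {0<..} s) * (c powr \<alpha> * Pm (s * c))"
        using P01[of "s * c"] by (simp add: abs_mult)
      also have "\<dots> \<le> BD \<alpha> n x s * (c powr \<alpha> * 1)"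
        using DD_BD[OF n a0 a2, where s=s] BD_nonneg[OF n a0 a2, where s=s] P01[of "s * c"] by (intro mult_mono) auto
      also have "\<dots> \<le> \<bar>c powr \<alpha> * BD \<alpha> n x s\<bar>" by (simp add: mult.commute)
      finally show "norm (DD n x s * indicator {0<..} s * (c powr \<alpha> * Pm (s * c))) \<le> norm (c powr \<alpha> * BD \<alpha> n x s)"
        by simp
    qed
  qed
  have B: "\<sigma>0 * frac_lap \<alpha> (fn n) x = (\<integral>s. \<sigma>0 * (DD n x s * indicator {0<..} s * (2 * (s powr (-\<alpha>) / \<alpha>))) \<partial>lborel)"
    unfolding frac_fub[OF n a0 a2] by simp
  have Bi: "integrable lborel (\<lambda>s. \<sigma>0 * (DD n x s * indicator {0<..} s * (2 * (s powr (-\<alpha>) / \<alpha>))))"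
    by (rule integrable_mult_right[OF fub_int[OF n a0 a2]])
  have diff: "c powr \<alpha> * (\<integral>h. fn n (x+h) - fn n x \<partial>\<nu>) - \<sigma>0 * frac_lap \<alpha> (fn n) x
     = (\<integral>s. DD n x s * indicator {0<..} s * (c powr \<alpha> * Pm (s * c) - \<sigma>0 * (2 * (s powr (-\<alpha>) / \<alpha>))) \<partial>lborel)"
    unfolding A B Bochner_Integration.integral_diff[OF Ai Bi, symmetric]
    by (intro Bochner_Integration.integral_cong) (auto simp: algebra_simps)
  define R where "R s = \<delta> * BD \<alpha> n x s + (U powr \<alpha> + 2 * S / \<alpha>) * 120 * (indicator {-(U/c)..U/c} s * \<bar>s\<bar> powr (1-\<alpha>))" for s
  have Rb: "has_bochner_integral lborel R (\<delta> * Btot \<alpha> + (U powr \<alpha> + 2 * S / \<alpha>) * 120 * (2 * ((U/c) powr (1-\<alpha>+1) / (1-\<alpha>+1))))"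
    unfolding R_def[abs_def]
    by (intro has_bochner_integral_add has_bochner_integral_mult_right BD_int[OF n a0 a2] E_zero) (use U c a2 in auto)
  have "\<bar>(\<integral>s. DD n x s * indicator {0<..} s * (c powr \<alpha> * Pm (s * c) - \<sigma>0 * (2 * (s powr (-\<alpha>) / \<alpha>))) \<partial>lborel)\<bar>
     \<le> (\<integral>s. R s \<partial>lborel)"
  proof (rule integral_abs_bound_integral)
    show "integrable lborel (\<lambda>s. DD n x s * indicator {0<..} s * (c powr \<alpha> * Pm (s * c) - \<sigma>0 * (2 * (s powr (-\<alpha>) / \<alpha>))))"
      using Bochner_Integration.integrable_diff[OF Ai Bi] by (simp add: algebra_simps)
    show "integrable lborel R" by (rule integrable.intros[OF Rb])
    fix s show "\<bar>DD n x s * indicator {0<..} s * (c powr \<alpha> * Pm (s * c) - \<sigma>0 * (2 * (s powr (-\<alpha>) / \<alpha>)))\<bar> \<le> R s"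
      unfolding R_def by (rule ptwise[OF n a0 a2 c U \<sigma>0 \<delta> P01]) (use tail in \<open>simp add: Pm_def\<close>)
  qed
  also have "\<dots> = \<delta> * Btot \<alpha> + (U powr \<alpha> + 2 * S / \<alpha>) * 120 * (2 * ((U/c) powr (1-\<alpha>+1) / (1-\<alpha>+1)))"
    by (rule has_bochner_integral_integral_eq[OF Rb])
  finally show ?thesis using diff unfolding \<nu>_def by simp
qed

end


lemma part5:
  fixes \<alpha> :: real and M :: "'a measure" and X :: "real \<Rightarrow> 'a \<Rightarrow> real" and \<sigma> :: "real \<Rightarrow> real" and \<eta> :: real
  assumes a0: "0 < \<alpha>" and a2: "\<alpha> < 2"
    and P: "prob_space M" and \<eta>: "\<eta> > 0"
    and Xm: "\<forall>x. X x \<in> borel_measurable M"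
    and sym: "\<forall>x. distr M borel (X x) = distr M borel (\<lambda>\<omega>. - X x \<omega>)"
    and \<sigma>0: "\<forall>x. \<sigma> x \<ge> 0" and \<sigma>b: "bounded (range \<sigma>)"
    and tail: "\<forall>\<epsilon>>0. \<exists>U. \<forall>u\<ge>U. \<forall>x.
                 \<bar>u powr \<alpha> * measure M {\<omega>\<in>space M. \<bar>X x \<omega>\<bar> \<ge> u} - 2 * \<sigma> x / \<alpha>\<bar> \<le> \<epsilon>"
    and \<epsilon>: "\<epsilon> > 0"
  shows "\<exists>K0. \<forall>K\<ge>K0. \<forall>n\<ge>1. \<forall>x.
                 \<bar>K powr \<eta> * (LINT h|distr M borel (\<lambda>\<omega>. X x \<omega> / K powr (\<eta> / \<alpha>)).
                      fn n (x + h) - fn n x)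
                  - \<sigma> x * frac_lap \<alpha> (fn n) x\<bar> \<le> \<epsilon>"
proof -
  obtain S where S: "\<And>x. \<bar>\<sigma> x\<bar> \<le> S" using \<sigma>b unfolding bounded_real by auto
  define \<delta> where "\<delta> = \<epsilon> / (2 * (\<bar>Btot \<alpha>\<bar> + 1))"
  have \<delta>0: "\<delta> > 0" using \<epsilon> by (simp add: \<delta>_def add_pos_nonneg)
  have \<delta>B: "\<delta> * Btot \<alpha> \<le> \<epsilon> / 2"
  proof -
    have "\<delta> * Btot \<alpha> \<le> \<delta> * (\<bar>Btot \<alpha>\<bar> + 1)" using \<delta>0 by (intro mult_left_mono) auto
    also have "\<dots> = \<epsilon> / 2" unfolding \<delta>_def by (simp add: field_simps add_pos_nonneg)
    finally show ?thesis .
  qed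
  obtain U0 where U0: "\<And>u x. u \<ge> U0 \<Longrightarrow> \<bar>u powr \<alpha> * measure M {\<omega>\<in>space M. \<bar>X x \<omega>\<bar> \<ge> u} - 2 * \<sigma> x / \<alpha>\<bar> \<le> \<delta>"
    using tail \<delta>0 by blast
  define U where "U = max U0 1"
  have U: "U > 0" by (simp add: U_def)
  define E0 where "E0 = U powr \<alpha> + 2 * S / \<alpha>"
  define C where "C = E0 * 120 * 2 * U powr (2-\<alpha>) / (2-\<alpha>)"
  define p where "p = - (\<eta> / \<alpha> * (2 - \<alpha>))"
  have p: "p < 0" using \<eta> a0 a2 by (simp add: p_def)
  have lim: "((\<lambda>K. C * K powr p) \<longlongrightarrow> C * 0) at_top"
    by (intro tendsto_mult tendsto_const tendsto_neg_powr[OF p] filterlim_ident)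
  have ev1: "eventually (\<lambda>K. \<bar>C * K powr p\<bar> < \<epsilon> / 2) at_top"
    using lim \<epsilon> unfolding tendsto_iff dist_real_def by (auto dest!: spec[of _ "\<epsilon>/2"])
  have ev: "eventually (\<lambda>K. \<bar>C * K powr p\<bar> < \<epsilon> / 2 \<and> K > 0) at_top"
    by (rule eventually_conj[OF ev1 eventually_gt_at_top])
  then obtain K0 where K0: "\<And>K. K \<ge> K0 \<Longrightarrow> \<bar>C * K powr p\<bar> < \<epsilon> / 2 \<and> K > 0"
    by (auto simp: eventually_at_top_linorder)
  show ?thesis
  proof (intro exI[of _ K0] allI impI)
    fix K n x assume K: "K \<ge> K0" and n: "n \<ge> (1::nat)"
    have Kp: "K > 0" and KC: "\<bar>C * K powr p\<bar> < \<epsilon> / 2" using K0[OF K] by auto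
    define c where "c = K powr (\<eta> / \<alpha>)"
    have c: "c > 0" using Kp by (simp add: c_def)
    have Kc: "K powr \<eta> = c powr \<alpha>" unfolding c_def powr_powr using a0 by simp
    have e: "\<bar>c powr \<alpha> * (\<integral>h. fn n (x+h) - fn n x \<partial>distr M borel (\<lambda>\<omega>. X x \<omega> / c)) - \<sigma> x * frac_lap \<alpha> (fn n) x\<bar>
      \<le> \<delta> * Btot \<alpha> + (U powr \<alpha> + 2 * S / \<alpha>) * 120 * (2 * ((U/c) powr (1-\<alpha>+1) / (1-\<alpha>+1)))"
    proof (rule est[OF n a0 a2 P _ _ c U])
      show "X x \<in> borel_measurable M" using Xm by simp
      show "distr M borel (X x) = distr M borel (\<lambda>\<omega>. - X x \<omega>)" using sym by simp
      show "0 \<le> \<sigma> x" using \<sigma>0 by simp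
      show "\<sigma> x \<le> S" using S[of x] by simp
      fix u assume "U \<le> u" then have "U0 \<le> u" by (simp add: U_def)
      then show "\<bar>u powr \<alpha> * measure M {\<omega>\<in>space M. \<bar>X x \<omega>\<bar> \<ge> u} - 2 * \<sigma> x / \<alpha>\<bar> \<le> \<delta>" by (rule U0)
    qed
    have T: "(U powr \<alpha> + 2 * S / \<alpha>) * 120 * (2 * ((U/c) powr (1-\<alpha>+1) / (1-\<alpha>+1))) = C * K powr p"
    proof -
      have "(U/c) powr (2-\<alpha>) = U powr (2-\<alpha>) * K powr p"
      proof -
        have "(U/c) powr (2-\<alpha>) = U powr (2-\<alpha>) / c powr (2-\<alpha>)" using U c by (simp add: powr_divide)
        also have "c powr (2-\<alpha>) = K powr (\<eta> / \<alpha> * (2 - \<alpha>))" unfolding c_def powr_powr ..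
        also have "K powr p = 1 / K powr (\<eta> / \<alpha> * (2 - \<alpha>))" unfolding p_def by (rule powr_minus_divide)
        ultimately show ?thesis by simp
      qed
      then show ?thesis unfolding C_def E0_def by (simp add: field_simps)
    qed
    show "\<bar>K powr \<eta> * (LINT h|distr M borel (\<lambda>\<omega>. X x \<omega> / K powr (\<eta> / \<alpha>)). fn n (x + h) - fn n x)
                  - \<sigma> x * frac_lap \<alpha> (fn n) x\<bar> \<le> \<epsilon>"
      using e T KC \<delta>B unfolding Kc c_def[symmetric] by linarith
  qed
qed

theorem lemma4p2:
  fixes \<alpha> :: real
  assumes "0 < \<alpha>" and "\<alpha> < 2"
  shows "(\<forall>n\<ge>1. C2 (fn n) \<and> (\<forall>x. fn n (- x) = fn n x) \<and> mono_on {0..} (fn n)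
            \<and> (\<forall>x. \<bar>x\<bar> \<le> real n - 1 \<longrightarrow> fn n x = 0)
            \<and> (\<forall>x. \<bar>x\<bar> \<ge> real n \<longrightarrow> fn n x = 1))
       \<and> (\<forall>x. fn 0 x = 1)
       \<and> (\<exists>C. \<forall>n\<ge>1. \<forall>x. \<bar>frac_lap \<alpha> (fn n) x\<bar> \<le> C)
       \<and> (\<forall>n\<ge>1. \<forall>x. \<bar>x\<bar> < real n - 1 \<longrightarrow>
            \<bar>frac_lap \<alpha> (fn n) x\<bar> \<le> 2 / (\<alpha> * (real n - 1 - \<bar>x\<bar>) powr \<alpha>))
       \<and> (\<forall>(M :: 'a measure) (X :: real \<Rightarrow> 'a \<Rightarrow> real) (\<sigma> :: real \<Rightarrow> real) (\<eta> :: real).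
            prob_space M \<and> \<eta> > 0
            \<and> (\<forall>x. X x \<in> borel_measurable M)
            \<and> (\<forall>x. distr M borel (X x) = distr M borel (\<lambda>\<omega>. - X x \<omega>))
            \<and> (\<forall>x. \<sigma> x \<ge> 0) \<and> bounded (range \<sigma>)
            \<and> (\<forall>\<epsilon>>0. \<exists>U. \<forall>u\<ge>U. \<forall>x.
                 \<bar>u powr \<alpha> * measure M {\<omega>\<in>space M. \<bar>X x \<omega>\<bar> \<ge> u} - 2 * \<sigma> x / \<alpha>\<bar> \<le> \<epsilon>)
          \<longrightarrow> (\<forall>\<epsilon>>0. \<exists>K0. \<forall>K\<ge>K0. \<forall>n\<ge>1. \<forall>x.
                 \<bar>K powr \<eta> * (LINT h|distr M borel (\<lambda>\<omega>. X x \<omega> / K powr (\<eta> / \<alpha>)).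
                      fn n (x + h) - fn n x)
                  - \<sigma> x * frac_lap \<alpha> (fn n) x\<bar> \<le> \<epsilon>))"
proof -
  have c1: "\<forall>n\<ge>1. C2 (fn n) \<and> (\<forall>x. fn n (- x) = fn n x) \<and> mono_on {0..} (fn n)
            \<and> (\<forall>x. \<bar>x\<bar> \<le> real n - 1 \<longrightarrow> fn n x = 0)
            \<and> (\<forall>x. \<bar>x\<bar> \<ge> real n \<longrightarrow> fn n x = 1)" using fn_props by blast
  have c2: "\<forall>x. fn 0 x = 1" using fn0 by blast
  have c3: "\<exists>C. \<forall>n\<ge>1. \<forall>x. \<bar>frac_lap \<alpha> (fn n) x\<bar> \<le> C"
    using frac_bound[OF _ assms] by blast
  have c4: "\<forall>n\<ge>1. \<forall>x. \<bar>x\<bar> < real n - 1 \<longrightarrow>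
            \<bar>frac_lap \<alpha> (fn n) x\<bar> \<le> 2 / (\<alpha> * (real n - 1 - \<bar>x\<bar>) powr \<alpha>)"
    using local_bound[OF _ assms] by blast
  have c5: "\<forall>(M :: 'a measure) (X :: real \<Rightarrow> 'a \<Rightarrow> real) (\<sigma> :: real \<Rightarrow> real) (\<eta> :: real).
            prob_space M \<and> \<eta> > 0
            \<and> (\<forall>x. X x \<in> borel_measurable M)
            \<and> (\<forall>x. distr M borel (X x) = distr M borel (\<lambda>\<omega>. - X x \<omega>))
            \<and> (\<forall>x. \<sigma> x \<ge> 0) \<and> bounded (range \<sigma>)
            \<and> (\<forall>\<epsilon>>0. \<exists>U. \<forall>u\<ge>U. \<forall>x.
                 \<bar>u powr \<alpha> * measure M {\<omega>\<in>space M. \<bar>X x \<omega>\<bar> \<ge> u} - 2 * \<sigma> x / \<alpha>\<bar> \<le> \<epsilon>)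
          \<longrightarrow> (\<forall>\<epsilon>>0. \<exists>K0. \<forall>K\<ge>K0. \<forall>n\<ge>1. \<forall>x.
                 \<bar>K powr \<eta> * (LINT h|distr M borel (\<lambda>\<omega>. X x \<omega> / K powr (\<eta> / \<alpha>)).
                      fn n (x + h) - fn n x)
                  - \<sigma> x * frac_lap \<alpha> (fn n) x\<bar> \<le> \<epsilon>)"
    by (intro allI impI, elim conjE, rule part5[OF assms], assumption+)
  show ?thesis using c1 c2 c3 c4 c5 by blast
qed


end
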